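(* Let $R$ be a domain satisfying the ascending chain condition for principal ideals, and let $a\in R$ be a non-zero element with $a\notin R^{\ast}$. Then: (i) there exist $b\in R$ and $c\in\operatorname{Sqf} R$ such that $a=b^2c$; (ii) there exist $n\geqslant 0$ and $s_0,s_1,\dots,s_n\in\operatorname{Sqf} R$ such that $a=s_n^{2^n}s_{n-1}^{2^{n-1}}\cdots s_1^2s_0$; (iii) there exist $n\geqslant 1$, $s_1,\dots,s_n\in(\operatorname{Sqf} R)\setminus R^{\ast}$, integers $0\leqslant k_1<k_2<\dots<k_n$, and $c\in R^{\ast}$ such that $a=c\,s_n^{2^{k_n}}s_{n-1}^{2^{k_{n-1}}}\cdots s_1^{2^{k_1}}$.
   Context: A domain is a commutative ring with identity without zero divisors. $R^{\ast}$ denotes the set of invertible elements of $R$. An element $a\in R$ is square-free if it cannot be written as $a=b^2c$ with $b\in R\setminus R^{\ast}$ and $c\in R$; $\operatorname{Sqf} R$ denotes the set of square-free elements of $R$. *)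

theory Defs
  imports "HOL-Computational_Algebra.Squarefree"
begin

definition pideal :: "'a :: comm_ring_1 \<Rightarrow> 'a set" where
  "pideal x = {r * x | r. True}"

definition ACCP :: "'a :: comm_ring_1 itself \<Rightarrow> bool" where
  "ACCP _ \<longleftrightarrow> (\<forall>f :: nat \<Rightarrow> 'a. (\<forall>n. pideal (f n) \<subseteq> pideal (f (Suc n))) \<longrightarrow>
                  (\<exists>N. \<forall>n\<ge>N. pideal (f n) = pideal (f N)))"

end

theory Submission
  imports Defs
begin

lemma wf_sdvd:
  assumes "ACCP TYPE('a::idom)"
  shows "wf {(x::'a, y). x dvd y \<and> \<not> y dvd x}"
proof (rule ccontr)
  assume "\<not> ?thesis"
  then obtain f where f: "\<And>i. (f (Suc i), f i) \<in> {(x::'a, y). x dvd y \<and> \<not> y dvd x}"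
    unfolding wf_iff_no_infinite_down_chain by blast
  have "\<forall>n. pideal (f n) \<subseteq> pideal (f (Suc n))"
  proof
    fix n
    from f[of n] obtain t where "f n = f (Suc n) * t" by (auto elim: dvdE)
    then show "pideal (f n) \<subseteq> pideal (f (Suc n))"
      unfolding pideal_def by (auto intro: exI[of _ "_ * t"] simp: mult.assoc mult.commute)
  qed
  with assms obtain N where N: "\<forall>n\<ge>N. pideal (f n) = pideal (f N)"
    unfolding ACCP_def by blast
  have "f (Suc N) \<in> pideal (f (Suc N))" unfolding pideal_def by force
  have e: "pideal (f (Suc N)) = pideal (f N)" using N le_SucI order_refl by blast
  with \<open>f (Suc N) \<in> pideal (f (Suc N))\<close> have "f (Suc N) \<in> pideal (f N)" by (simp only:)
  then have "f N dvd f (Suc N)" unfolding pideal_def by auto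
  with f[of N] show False by auto
qed

lemma sq_unit_mult:
  assumes "(u::'a::idom) dvd 1" "squarefree c"
  shows "squarefree (u * c)"
proof -
  have "u * c dvd c" using assms(1) by (simp add: mult.commute[of u] dvd_mult_unit_iff)
  then show ?thesis using assms(2) squarefree_mono by blast
qed

lemma sq1: "squarefree (1::'a::idom)"
proof (rule squarefreeI)
  fix x :: 'a assume "x^2 dvd 1"
  moreover have "x dvd x^2" by (simp add: power2_eq_square)
  ultimately show "x dvd 1" by (rule dvd_trans[rotated])
qed

lemma unit_sq: "(b::'a::idom) dvd 1 \<Longrightarrow> b^2 dvd 1"
proof -
  assume h: "b dvd 1"
  from h h have "b * b dvd 1 * 1" by (rule mult_dvd_mono)
  then show ?thesis by (simp add: power2_eq_square)
qed

lemma unit_mult: "(x::'a::idom) dvd 1 \<Longrightarrow> y dvd 1 \<Longrightarrow> x * y dvd 1"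
proof -
  assume "x dvd 1" "y dvd 1"
  then have "x * y dvd 1 * 1" by (rule mult_dvd_mono)
  then show ?thesis by simp
qed

lemma pw: "((x::'a::idom) ^ (2 ^ k)) ^ 2 = x ^ (2 ^ Suc k)"
proof -
  have e: "2 ^ Suc k = 2 ^ k * (2::nat)" by (rule power_Suc2)
  show ?thesis by (simp only: e power_mult)
qed

lemma dec1:
  assumes "ACCP TYPE('a::idom)"
  shows "\<exists>b c. squarefree c \<and> (a::'a) = b ^ 2 * c"
proof (induction a rule: wf_induct_rule[OF wf_sdvd[OF assms]])
  case (1 a)
  show ?case
  proof (cases "a = 0")
    case True show ?thesis by (rule exI[of _ 0], rule exI[of _ 1]) (simp add: True sq1)
  next
    case False
    show ?thesis
    proof (cases "squarefree a")
      case True then show ?thesis by (intro exI[of _ 1] exI[of _ a]) simp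
    next
      case nsq: False
      then obtain x c where x: "\<not> x dvd 1" "a = x^2 * c"
        unfolding squarefree_def by (meson dvdE)
      have c0: "c \<noteq> 0" using False x by auto
      have "c dvd a" using x by simp
      moreover have "\<not> a dvd c"
      proof
        assume "a dvd c"
        then obtain t where ct: "c = a * t" by (auto elim: dvdE)
        have "c * 1 = a * t" using ct by simp
        also have "a * t = c * (x^2 * t)" by (simp only: x(2) mult_ac)
        finally have "c * 1 = c * (x^2 * t)" .
        then have xt: "1 = x^2 * t" by (rule iffD1[OF mult_left_cancel[OF c0]])
        have "x dvd x^2 * t" by (simp add: power2_eq_square)
        then have "x dvd 1" by (simp only: xt[symmetric])
        with x show False by simp
      qed
      ultimately obtain b c' where "squarefree c'" "c = b^2 * c'" using 1 by blast
      then show ?thesis using x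
        by (intro exI[of _ "x*b"] exI[of _ c']) (simp add: algebra_simps power_mult_distrib)
    qed
  qed
qed

lemma strict_b:
  assumes "(a::'a::idom) \<noteq> 0" "a = b^2 * c" "\<not> b dvd 1"
  shows "(b, a) \<in> {(x::'a, y). x dvd y \<and> \<not> y dvd x}"
proof -
  have b0: "b \<noteq> 0" using assms by auto
  have "b dvd a" using assms by (simp add: power2_eq_square)
  moreover have "\<not> a dvd b"
  proof
    assume "a dvd b"
    then obtain t where bt: "b = a * t" by (auto elim: dvdE)
    have "b * 1 = a * t" using bt by simp
    also have "a * t = b * (b * c * t)" by (simp only: assms(2) power2_eq_square mult_ac)
    finally have "b * 1 = b * (b * c * t)" .
    then have "1 = b * (c * t)" using b0 mult_left_cancel by (simp add: mult.assoc)
    then have "b dvd 1" by (rule dvdI)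
    with assms show False by simp
  qed
  ultimately show ?thesis by simp
qed

lemma dec2:
  assumes "ACCP TYPE('a::idom)"
  shows "(a::'a) \<noteq> 0 \<longrightarrow> (\<exists>(n::nat) (s :: nat \<Rightarrow> 'a). (\<forall>i\<le>n. squarefree (s i)) \<and>
            a = (\<Prod>i\<le>n. s i ^ (2 ^ i)))"
proof (induction a rule: wf_induct_rule[OF wf_sdvd[OF assms]])
  case (1 a)
  show ?case
  proof
    assume a0: "a \<noteq> 0"
    obtain b c where bc: "squarefree c" "a = b^2 * c" using dec1[OF assms] by blast
    show "\<exists>(n::nat) (s :: nat \<Rightarrow> 'a). (\<forall>i\<le>n. squarefree (s i)) \<and> a = (\<Prod>i\<le>n. s i ^ (2 ^ i))"
    proof (cases "b dvd 1")
      case True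
      then have "squarefree a" using bc sq_unit_mult[of "b^2" c] using unit_sq by blast
      then show ?thesis by (intro exI[of _ 0] exI[of _ "\<lambda>_. a"]) simp
    next
      case False
      have b0: "b \<noteq> 0" using a0 bc by auto
      from 1 strict_b[OF a0 bc(2) False] b0 obtain m t where
        t: "\<forall>i\<le>m. squarefree (t i)" "b = (\<Prod>i\<le>m. t i ^ (2 ^ i))" by blast
      define s where "s = (\<lambda>i. if i = 0 then c else t (i - 1))"
      have "(\<Prod>i\<le>Suc m. s i ^ (2 ^ i)) = s 0 ^ 1 * (\<Prod>i\<le>m. s (Suc i) ^ (2 ^ Suc i))"
        by (subst prod.atMost_Suc_shift) simp
      also have "\<dots> = c * (\<Prod>i\<le>m. (t i ^ (2 ^ i))^2)"
        by (simp add: s_def power_mult[symmetric] mult.commute)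
      also have "\<dots> = a" using bc t by (simp add: prod_power_distrib mult.commute)
      finally show ?thesis using t bc
        by (intro exI[of _ "Suc m"] exI[of _ s]) (auto simp: s_def)
    qed
  qed
qed

lemma dec3:
  assumes "ACCP TYPE('a::idom)"
  shows "(a::'a) \<noteq> 0 \<longrightarrow> \<not> a dvd 1 \<longrightarrow> (\<exists>(n::nat) (s :: nat \<Rightarrow> 'a) (k :: nat \<Rightarrow> nat) c. n \<ge> 1 \<and>
            (\<forall>i\<in>{1..n}. squarefree (s i) \<and> \<not> s i dvd 1) \<and>
            (\<forall>i\<in>{1..<n}. k i < k (Suc i)) \<and>
            c dvd 1 \<and>
            a = c * (\<Prod>i=1..n. s i ^ (2 ^ k i)))"
proof (induction a rule: wf_induct_rule[OF wf_sdvd[OF assms]])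
  case (1 a)
  show ?case
  proof (intro impI)
    assume a0: "a \<noteq> 0" and au: "\<not> a dvd 1"
    obtain b c where bc: "squarefree c" "a = b^2 * c" using dec1[OF assms] by blast
    show "\<exists>(n::nat) (s :: nat \<Rightarrow> 'a) (k :: nat \<Rightarrow> nat) c. n \<ge> 1 \<and>
            (\<forall>i\<in>{1..n}. squarefree (s i) \<and> \<not> s i dvd 1) \<and>
            (\<forall>i\<in>{1..<n}. k i < k (Suc i)) \<and>
            c dvd 1 \<and>
            a = c * (\<Prod>i=1..n. s i ^ (2 ^ k i))"
    proof (cases "b dvd 1")
      case True
      have "\<not> c dvd 1"
      proof
        assume "c dvd 1"
        then have "b^2 * c dvd 1 * 1" using unit_sq[OF True] mult_dvd_mono by blast
        with au bc show False by simp
      qed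
      then show ?thesis using bc True
        by (intro exI[of _ 1] exI[of _ "\<lambda>_. c"] exI[of _ "\<lambda>_. 0"] exI[of _ "b^2"]) (auto simp: unit_sq)
    next
      case False
      have b0: "b \<noteq> 0" using a0 bc by auto
      from 1 strict_b[OF a0 bc(2) False] b0 False obtain m t k u where
        t: "m \<ge> 1" "\<forall>i\<in>{1..m}. squarefree (t i) \<and> \<not> t i dvd 1"
           "\<forall>i\<in>{1..<m}. k i < k (Suc i)" "u dvd 1" "b = u * (\<Prod>i=1..m. t i ^ (2 ^ k i))"
        by blast
      have "b^2 = u^2 * (\<Prod>i=1..m. t i ^ (2 ^ k i))^2"
        using t(5) by (simp only: power_mult_distrib)
      also have "(\<Prod>i=1..m. t i ^ (2 ^ k i))^2 = (\<Prod>i=1..m. (t i ^ (2 ^ k i))^2)"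
        by (rule prod_power_distrib)
      also have "\<dots> = (\<Prod>i=1..m. t i ^ (2 ^ Suc (k i)))"
        by (rule prod.cong) (simp_all only: pw)
      finally have eq0: "b^2 = u^2 * (\<Prod>i=1..m. t i ^ (2 ^ Suc (k i)))" .
      have eq: "a = (u^2 * c) * (\<Prod>i=1..m. t i ^ (2 ^ Suc (k i)))"
      proof -
        have "a = b^2 * c" by (rule bc(2))
        also have "\<dots> = (u^2 * (\<Prod>i=1..m. t i ^ (2 ^ Suc (k i)))) * c" by (simp only: eq0)
        also have "\<dots> = (u^2 * c) * (\<Prod>i=1..m. t i ^ (2 ^ Suc (k i)))" by (simp only: mult.assoc mult.commute[of _ c])
        finally show ?thesis .
      qed
      show ?thesis
      proof (cases "c dvd 1")
        case True
        have uc: "u^2 * c dvd 1" using unit_mult[OF unit_sq[OF t(4)] True] .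
        have inc0: "\<forall>i\<in>{1..<m}. Suc (k i) < Suc (k (Suc i))" using t(3) by simp
        show ?thesis
          apply (rule exI[of _ m], rule exI[of _ t], rule exI[of _ "\<lambda>i. Suc (k i)"], rule exI[of _ "u^2*c"])
          using t(1,2) eq uc inc0 by blast
      next
        case cu: False
        define s where "s = (\<lambda>i. if i = 1 then c else t (i - 1))"
        define k' where "k' = (\<lambda>i. if i = 1 then 0 else Suc (k (i - 1)))"
        have p1: "(\<Prod>i=1..Suc m. s i ^ (2 ^ k' i)) = s 1 ^ (2 ^ k' 1) * (\<Prod>i=Suc 1..Suc m. s i ^ (2 ^ k' i))"
          by (rule prod.atLeast_Suc_atMost) simp
        have p2: "(\<Prod>i=Suc 1..Suc m. s i ^ (2 ^ k' i)) = (\<Prod>i=1..m. s (Suc i) ^ (2 ^ k' (Suc i)))"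
          by (rule prod.shift_bounds_cl_Suc_ivl)
        have p3: "(\<Prod>i=1..m. s (Suc i) ^ (2 ^ k' (Suc i))) = (\<Prod>i=1..m. t i ^ (2 ^ Suc (k i)))"
          by (rule prod.cong) (auto simp: s_def k'_def)
        have p4: "s 1 ^ (2 ^ k' 1) = c" by (simp add: s_def k'_def)
        have pe: "(\<Prod>i=1..Suc m. s i ^ (2 ^ k' i)) = c * (\<Prod>i=1..m. t i ^ (2 ^ Suc (k i)))"
          by (simp only: p1 p2 p3 p4)
        have a2: "a = u^2 * (\<Prod>i=1..Suc m. s i ^ (2 ^ k' i))" 
        proof -
          have "a = (u^2 * c) * (\<Prod>i=1..m. t i ^ (2 ^ Suc (k i)))" by (rule eq)
          also have "\<dots> = u^2 * (c * (\<Prod>i=1..m. t i ^ (2 ^ Suc (k i))))" by (rule mult.assoc)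
          also have "\<dots> = u^2 * (\<Prod>i=1..Suc m. s i ^ (2 ^ k' i))" by (simp only: pe)
          finally show ?thesis .
        qed
        have inc: "\<forall>i\<in>{1..<Suc m}. k' i < k' (Suc i)"
        proof
          fix i assume "i \<in> {1..<Suc m}"
          then have i: "1 \<le> i" "i < Suc m" by auto
          show "k' i < k' (Suc i)"
          proof (cases "i = 1")
            case True then show ?thesis by (simp add: k'_def)
          next
            case False
            then have "i - 1 \<in> {1..<m}" "Suc (i - 1) = i" using i by auto
            then have "k (i - 1) < k i" using t(3) by force
            then show ?thesis using False i by (simp add: k'_def)
          qed
        qed
        have sq: "\<forall>i\<in>{1..Suc m}. squarefree (s i) \<and> \<not> s i dvd 1"
        proof
          fix i assume i: "i \<in> {1..Suc m}"
          show "squarefree (s i) \<and> \<not> s i dvd 1"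
          proof (cases "i = 1")
            case True then show ?thesis using bc cu by (simp add: s_def)
          next
            case False
            then have "i - 1 \<in> {1..m}" using i by auto
            then show ?thesis using t(2) False by (simp add: s_def)
          qed
        qed
        have m1: "Suc m \<ge> 1" by simp
        show ?thesis
          apply (rule exI[of _ "Suc m"], rule exI[of _ s], rule exI[of _ k'], rule exI[of _ "u^2"])
          using a2 inc sq unit_sq[OF t(4)] m1 by blast
      qed
    qed
  qed
qed

theorem proposition1:
  fixes a :: "'a :: idom"
  assumes "ACCP TYPE('a)"
    and "a \<noteq> 0"
    and "\<not> a dvd 1"
  shows "(\<exists>b c. squarefree c \<and> a = b ^ 2 * c)
       \<and> (\<exists>(n::nat) (s :: nat \<Rightarrow> 'a). (\<forall>i\<le>n. squarefree (s i)) \<and>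
            a = (\<Prod>i\<le>n. s i ^ (2 ^ i)))
       \<and> (\<exists>(n::nat) (s :: nat \<Rightarrow> 'a) (k :: nat \<Rightarrow> nat) c. n \<ge> 1 \<and>
            (\<forall>i\<in>{1..n}. squarefree (s i) \<and> \<not> s i dvd 1) \<and>
            (\<forall>i\<in>{1..<n}. k i < k (Suc i)) \<and>
            c dvd 1 \<and>
            a = c * (\<Prod>i=1..n. s i ^ (2 ^ k i)))"
  by (rule conjI[OF dec1[OF assms(1)] conjI[OF mp[OF dec2[OF assms(1)] assms(2)] mp[OF mp[OF dec3[OF assms(1)] assms(2)] assms(3)]]])

end
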